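(* Let $\mu\in\mathbb{R}$ and $\nu>0$ be constants, and let $G$ be one of the functions $$G_1(t)=\frac{1+(t/2+\mu)^2}{1+(t+\mu)^2},\qquad G_2(t)=\frac{(t/2+\nu)^2}{(t+\nu)^2}.$$ Let $\alpha\in(\frac12,1)$. If $t>0$ and $G(t)\ge\alpha$, then $G(t')>\alpha$ for every $0<t'<t$. *)

theory Defs
  imports Complex_Main
begin

definition G1 :: "real \<Rightarrow> real \<Rightarrow> real" where
  "G1 \<mu> t = (1 + (t/2 + \<mu>)^2) / (1 + (t + \<mu>)^2)"

definition G2 :: "real \<Rightarrow> real \<Rightarrow> real" where
  "G2 \<nu> t = (t/2 + \<nu>)^2 / (t + \<nu>)^2"

end

theory Submission
  imports Defs
begin

lemma g1_case:
  fixes \<mu> \<alpha> t t' :: real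
  assumes "1/2 < \<alpha>" "\<alpha> < 1" "t > 0" "G1 \<mu> t \<ge> \<alpha>" "0 < t'" "t' < t"
  shows "G1 \<mu> t' > \<alpha>"
proof -
  define f where "f s = 1 + (s/2 + \<mu>)^2 - \<alpha> * (1 + (s + \<mu>)^2)" for s
  have den: "1 + (s + \<mu>)^2 > 0" for s :: real by (simp add: add_pos_nonneg)
  have ft: "f t \<ge> 0" using assms(4) den[of t]
    by (simp add: G1_def f_def le_divide_eq algebra_simps)
have f0: "f 0 > 0"
  proof -
    have "f 0 = (1 - \<alpha>) * (1 + \<mu>^2)" unfolding f_def by (simp add: algebra_simps)
    moreover have "(1 - \<alpha>) * (1 + \<mu>^2) > 0" using assms(2) by (simp add: add_pos_nonneg)
    ultimately show ?thesis by simp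
  qed
  have id: "t * f t' = (t - t') * f 0 + t' * f t + t * (\<alpha> - 1/4) * t' * (t - t')"
    unfolding f_def by (simp add: field_simps power2_eq_square)
  have "(t - t') * f 0 > 0" using f0 assms by simp
  moreover have "t' * f t \<ge> 0" using ft assms by simp
  moreover have "t * (\<alpha> - 1/4) * t' * (t - t') > 0" using assms by simp
  ultimately have "t * f t' > 0" using id by linarith
  hence "f t' > 0" using assms(3) by (simp add: zero_less_mult_iff)
  thus ?thesis using den[of t']
    by (simp add: G1_def f_def less_divide_eq algebra_simps)
qed

lemma g2_case:
  fixes \<nu> \<alpha> t t' :: real
  assumes "\<nu> > 0" "t > 0" "G2 \<nu> t \<ge> \<alpha>" "0 < t'" "t' < t"
  shows "G2 \<nu> t' > \<alpha>"
proof -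
  have "(t/2 + \<nu>) / (t + \<nu>) < (t'/2 + \<nu>) / (t' + \<nu>)"
    using assms by (simp add: divide_simps algebra_simps)
  moreover have "0 \<le> (t/2 + \<nu>) / (t + \<nu>)" using assms by simp
  ultimately have "((t/2 + \<nu>) / (t + \<nu>))^2 < ((t'/2 + \<nu>) / (t' + \<nu>))^2"
    by (rule power_strict_mono) simp
  thus ?thesis using assms(3) by (simp add: G2_def power_divide)
qed

theorem lemma3p1:
  fixes \<mu> \<nu> \<alpha> :: real and G :: "real \<Rightarrow> real"
  assumes "\<nu> > 0"
    and "G = G1 \<mu> \<or> G = G2 \<nu>"
    and "1/2 < \<alpha>" and "\<alpha> < 1"
    and "t > 0" and "G t \<ge> \<alpha>"
    and "0 < t'" and "t' < t"
  shows "G t' > \<alpha>"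
  using assms g1_case g2_case by metis

end
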